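(* For $\theta\in\mathbb R$ let $\mathbb R_{n,\theta}$ be the probability distribution on $S_n$ with $\mathbb R_{n,\theta}(\pi)=e^{\theta N_n(\pi,e_n)-Z_n(\theta)}$, where $e_n$ is the identity, $N_n(\pi,e_n)=\sum_{i=1}^n1\{\pi(i)=i\}$ is the number of fixed points, and $Z_n(\theta)$ is the log normalizing constant. Let $\pi_n\sim\mathbb R_{n,\theta}$. Then for every $\theta\ne0$: (a) $N_n(\pi_n,e_n)$ converges to a Poisson random variable with mean $e^\theta$ in distribution and in moments; (b) $\pi_n$ converges in probability to the uniform distribution on $[0,1]^2$; (c) $\dfrac{\mathbb R_{n,\theta}(\pi_n(1)=1,\pi_n(2)=2)}{\mathbb R_{n,\theta}(\pi_n(1)=2,\pi_n(2)=1)}=e^{2\theta}\ne1$.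
   Context: A sequence of random permutations $\pi_n$ converges in probability to a deterministic probability measure $\mu$ on $[0,1]^2$ if for every continuous $f$ on $[0,1]^2$, $\frac1n\sum_{i=1}^n f(i/n,\pi_n(i)/n)\to\int f\,d\mu$ in probability. *)

theory Defs
  imports "HOL-Probability.Probability" "HOL-Combinatorics.Permutations"
begin

text \<open>Permutations of [n] = {1..n} are functions nat => nat with pi permutes {1..n}.\<close>

definition fixpts :: "nat \<Rightarrow> (nat \<Rightarrow> nat) \<Rightarrow> nat" where
  "fixpts n \<pi> = card {i \<in> {1..n}. \<pi> i = i}"

definition logZ :: "nat \<Rightarrow> real \<Rightarrow> real" where
  "logZ n \<theta> = ln (\<Sum>\<sigma>\<in>{\<sigma>. \<sigma> permutes {1..n}}. exp (\<theta> * real (fixpts n \<sigma>)))"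

definition R_pmf :: "nat \<Rightarrow> real \<Rightarrow> (nat \<Rightarrow> nat) pmf" where
  "R_pmf n \<theta> = embed_pmf (\<lambda>\<pi>. if \<pi> permutes {1..n}
      then exp (\<theta> * real (fixpts n \<pi>) - logZ n \<theta>) else 0)"

definition conv_prob_uniform :: "(nat \<Rightarrow> (nat \<Rightarrow> nat) pmf) \<Rightarrow> bool" where
  "conv_prob_uniform P \<longleftrightarrow>
    (\<forall>f :: real \<times> real \<Rightarrow> real. continuous_on (cbox (0,0) (1,1)) f \<longrightarrow>
      (\<forall>\<epsilon>>0. (\<lambda>n. measure_pmf.prob (P n)
          {\<pi>. \<bar>(1 / real n) * (\<Sum>i=1..n. f (real i / real n, real (\<pi> i) / real n))
                 - integral (cbox (0,0) (1,1)) f\<bar> > \<epsilon>}) \<longlonglongrightarrow> 0))"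

end

theory Submission
  imports Defs
begin

definition bb :: "nat \<Rightarrow> real" where "bb m = (\<Sum>i\<le>m. (-1)^i / fact i)"

lemma inner_binom:
  "(\<Sum>j\<le>k. (-1::real)^(k-j) / (fact (k-j) * fact j)) = (if k = 0 then 1 else 0)"
proof -
  have "(\<Sum>j\<le>k. (-1::real)^(k-j) / (fact (k-j) * fact j))
      = (\<Sum>j\<le>k. of_nat (k choose j) * 1^j * (-1::real)^(k-j)) / fact k"
    unfolding sum_divide_distrib
    by (intro sum.cong refl) (simp add: binomial_fact field_simps)
  also have "\<dots> = (1 + (-1::real))^k / fact k"
    by (subst binomial_ring) simp
  finally show ?thesis by simp
qed

lemma conv_identity: "(\<Sum>j\<le>m. bb (m-j) / fact j) = 1"
proof -
  define g where "g = (\<lambda>j i. (-1::real)^i / (fact i * fact j))"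
  have "(\<Sum>j\<le>m. bb (m-j) / fact j) = (\<Sum>j\<le>m. \<Sum>i\<le>m-j. g j i)"
    unfolding bb_def g_def sum_divide_distrib by (simp add: field_simps)
  also have "\<dots> = (\<Sum>(j,i)\<in>(SIGMA j:{..m}. {..m-j}). g j i)"
    by (simp add: sum.Sigma)
  also have "(SIGMA j:{..m}. {..m-j}) = {(j,i). j+i \<le> m}" by auto
  also have "(\<Sum>(j,i)\<in>{(j,i). j+i \<le> m}. g j i) = (\<Sum>k\<le>m. \<Sum>j\<le>k. g j (k-j))"
    by (rule sum.triangle_reindex_eq)
  also have "\<dots> = (\<Sum>k\<le>m. (if k = 0 then 1 else 0))"
    unfolding g_def using inner_binom by (intro sum.cong refl) (simp add: mult.commute)
  also have "\<dots> = 1" by (simp add: sum.delta)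
  finally show ?thesis .
qed

lemma bb_limit: "bb \<longlonglongrightarrow> exp (-1)"
proof -
  have "(\<lambda>n. (-1::real)^n / fact n) sums exp (-1)"
    using exp_converges[of "-1::real"] by (simp add: divide_inverse scaleR_conv_of_real mult.commute)
  hence "(\<lambda>n. \<Sum>i<n. (-1::real)^i / fact i) \<longlonglongrightarrow> exp (-1)" by (simp add: sums_def)
  hence "(\<lambda>n. \<Sum>i<Suc n. (-1::real)^i / fact i) \<longlonglongrightarrow> exp (-1)" by (rule LIMSEQ_Suc)
  thus ?thesis unfolding bb_def lessThan_Suc_atMost by simp
qed

definition fixset :: "nat set \<Rightarrow> (nat\<Rightarrow>nat) \<Rightarrow> nat set" where
  "fixset S \<pi> = {x\<in>S. \<pi> x = x}"
definition Der :: "nat set \<Rightarrow> (nat\<Rightarrow>nat) set" where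
  "Der A = {\<sigma>. \<sigma> permutes A \<and> (\<forall>x\<in>A. \<sigma> x \<noteq> x)}"

lemma fix_eq_Der:
  assumes "F \<subseteq> S"
  shows "{\<pi>. \<pi> permutes S \<and> fixset S \<pi> = F} = Der (S - F)"
proof (intro equalityI subsetI)
  fix \<pi> assume "\<pi> \<in> {\<pi>. \<pi> permutes S \<and> fixset S \<pi> = F}"
  hence p: "\<pi> permutes S" and F: "F = fixset S \<pi>" by auto
  have "\<pi> permutes (S - fixset S \<pi>)"
    using p unfolding permutes_def fixset_def by auto
  moreover have "\<forall>x\<in>S - fixset S \<pi>. \<pi> x \<noteq> x" unfolding fixset_def by auto
  ultimately show "\<pi> \<in> Der (S - F)" unfolding Der_def F by auto
next
  fix \<pi> assume "\<pi> \<in> Der (S - F)"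
  hence p: "\<pi> permutes (S - F)" and d: "\<forall>x\<in>S - F. \<pi> x \<noteq> x" unfolding Der_def by auto
  have "\<pi> permutes S" using permutes_subset[OF p] by auto
  moreover have "fixset S \<pi> = F"
    using d permutes_not_in[OF p] assms unfolding fixset_def by auto
  ultimately show "\<pi> \<in> {\<pi>. \<pi> permutes S \<and> fixset S \<pi> = F}" by auto
qed
lemma finite_perms: "finite S \<Longrightarrow> finite {\<pi>. \<pi> permutes S}"
  by (rule finite_permutations)

lemma count_by_fixset:
  assumes S: "finite S"
  shows "card {\<pi>. \<pi> permutes S \<and> card (fixset S \<pi>) = j}
       = (\<Sum>F\<in>{F. F \<subseteq> S \<and> card F = j}. card (Der (S - F)))"
proof -
  define X where "X = {\<pi>. \<pi> permutes S \<and> card (fixset S \<pi>) = j}"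
  have fX: "finite X" unfolding X_def using finite_perms[OF S] by (rule finite_subset[rotated]) auto
  have fT: "finite {F. F \<subseteq> S \<and> card F = j}" using S by auto
  have "card X = (\<Sum>\<pi>\<in>X. 1)" by simp
  also have "\<dots> = (\<Sum>F\<in>{F. F \<subseteq> S \<and> card F = j}. \<Sum>\<pi>\<in>{\<pi>\<in>X. fixset S \<pi> = F}. 1)"
    by (rule sum.group[symmetric, OF fX fT]) (auto simp: X_def fixset_def)
  also have "\<dots> = (\<Sum>F\<in>{F. F \<subseteq> S \<and> card F = j}. card (Der (S - F)))"
  proof (intro sum.cong refl)
    fix F assume F: "F \<in> {F. F \<subseteq> S \<and> card F = j}"
    have "{\<pi>\<in>X. fixset S \<pi> = F} = {\<pi>. \<pi> permutes S \<and> fixset S \<pi> = F}"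
      using F unfolding X_def by auto
    thus "(\<Sum>\<pi>\<in>{\<pi>\<in>X. fixset S \<pi> = F}. 1) = card (Der (S - F))"
      using fix_eq_Der[of F S] F by simp
  qed
  finally show ?thesis unfolding X_def .
qed

lemma count_total:
  assumes S: "finite S"
  shows "card {\<pi>. \<pi> permutes S} = (\<Sum>F\<in>Pow S. card (Der (S - F)))"
proof -
  define X where "X = {\<pi>. \<pi> permutes S}"
  have fX: "finite X" unfolding X_def using finite_perms[OF S] .
  have "card X = (\<Sum>\<pi>\<in>X. 1)" by simp
  also have "\<dots> = (\<Sum>F\<in>Pow S. \<Sum>\<pi>\<in>{\<pi>\<in>X. fixset S \<pi> = F}. 1)"
    by (rule sum.group[symmetric, OF fX]) (auto simp: X_def fixset_def S)
  also have "\<dots> = (\<Sum>F\<in>Pow S. card (Der (S - F)))"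
  proof (intro sum.cong refl)
    fix F assume F: "F \<in> Pow S"
    have "{\<pi>\<in>X. fixset S \<pi> = F} = {\<pi>. \<pi> permutes S \<and> fixset S \<pi> = F}"
      unfolding X_def by auto
    thus "(\<Sum>\<pi>\<in>{\<pi>\<in>X. fixset S \<pi> = F}. 1) = card (Der (S - F))"
      using fix_eq_Der[of F S] F by simp
  qed
  finally show ?thesis unfolding X_def .
qed

lemma card_Der:
  assumes "finite A"
  shows "real (card (Der A)) = fact (card A) * bb (card A)"
  using assms
proof (induction "card A" arbitrary: A rule: less_induct)
  case less
  define m where "m = card A"
  have fA: "finite A" by fact
  define h where "h = (\<lambda>k. fact (m - k) * bb (m - k) :: real)"
  have IH: "real (card (Der (A - F))) = h (card F)" if "F \<in> Pow A - {{}}" for F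
  proof -
    have fF: "finite F" using that fA finite_subset by auto
    have cF: "card (A - F) = m - card F" using that fF m_def by (simp add: card_Diff_subset)
    have "card F > 0" using that fF by (auto simp: card_gt_0_iff)
    moreover have "card F \<le> m" using that fA m_def by (simp add: card_mono)
    ultimately have "card (A - F) < card A" using cF m_def by simp
    thus ?thesis using less(1)[of "A - F"] fA cF h_def by auto
  qed
  have "fact m = real (card {\<pi>. \<pi> permutes A})" using card_permutations[OF m_def[symmetric] fA] by simp
  also have "\<dots> = (\<Sum>F\<in>Pow A. real (card (Der (A - F))))"
    using count_total[OF fA] by simp
  also have "\<dots> = real (card (Der A)) + (\<Sum>F\<in>Pow A - {{}}. real (card (Der (A - F))))"
    using fA by (subst sum.remove[of _ "{}"]) auto
  also have "(\<Sum>F\<in>Pow A - {{}}. real (card (Der (A - F)))) = (\<Sum>F\<in>Pow A - {{}}. h (card F))"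
    using IH by (intro sum.cong) auto
  also have "\<dots> = (\<Sum>j\<in>{1..m}. \<Sum>F\<in>{F\<in>Pow A - {{}}. card F = j}. h (card F))"
  proof (rule sum.group[symmetric])
    show "finite (Pow A - {{}})" using fA by simp
    show "card ` (Pow A - {{}}) \<subseteq> {1..m}"
    proof
      fix j assume "j \<in> card ` (Pow A - {{}})"
      then obtain F where F: "F \<in> Pow A - {{}}" "j = card F" by auto
      have fF: "finite F" using F fA finite_subset by auto
      show "j \<in> {1..m}" using F fF fA m_def by (auto simp: card_gt_0_iff card_mono Suc_le_eq)
    qed
  qed simp
  also have "\<dots> = (\<Sum>j\<in>{1..m}. of_nat (m choose j) * h j)"
  proof (intro sum.cong refl)
    fix j assume j: "j \<in> {1..m}"
    have "{F\<in>Pow A - {{}}. card F = j} = {F. F \<subseteq> A \<and> card F = j}" using j by auto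
    thus "(\<Sum>F\<in>{F\<in>Pow A - {{}}. card F = j}. h (card F)) = of_nat (m choose j) * h j"
      using n_subsets[OF fA, of j] m_def by simp
  qed
  also have "\<dots> = (\<Sum>j\<in>{1..m}. fact m * (bb (m - j) / fact j))"
    unfolding h_def by (intro sum.cong refl) (auto simp: binomial_fact field_simps)
  finally have eq: "fact m = real (card (Der A)) + fact m * (\<Sum>j\<in>{1..m}. bb (m - j) / fact j)"
    by (simp add: sum_distrib_left)
  have "(\<Sum>j\<le>m. bb (m-j) / fact j) = bb m + (\<Sum>j\<in>{1..m}. bb (m - j) / fact j)"
  proof -
    have "{..m} = insert 0 {1..m}" by auto
    thus ?thesis by simp
  qed
  hence "(\<Sum>j\<in>{1..m}. bb (m - j) / fact j) = 1 - bb m" using conv_identity[of m] by simp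
  with eq have "real (card (Der A)) = fact m - fact m * (1 - bb m)" by simp
  thus ?case unfolding m_def[symmetric] by (simp add: algebra_simps)
qed

abbreviation PS :: "nat \<Rightarrow> (nat \<Rightarrow> nat) set" where "PS n \<equiv> {\<sigma>. \<sigma> permutes {1..n}}"

definition Zs :: "nat \<Rightarrow> real \<Rightarrow> real" where
  "Zs n t = (\<Sum>\<sigma>\<in>PS n. exp (t * real (fixpts n \<sigma>)))"
definition W :: "nat \<Rightarrow> real \<Rightarrow> real" where
  "W n t = (\<Sum>j\<le>n. exp (t * real j) * bb (n - j) / fact j)"

lemma fixpts_fixset: "fixpts n \<pi> = card (fixset {1..n} \<pi>)"
  unfolding fixpts_def fixset_def by simp

lemma fixpts_le: "fixpts n \<pi> \<le> n"
proof -
  have "{i\<in>{1..n}. \<pi> i = i} \<subseteq> {1..n}" by auto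
  hence "card {i\<in>{1..n}. \<pi> i = i} \<le> card {1..n}" by (intro card_mono) auto
  thus ?thesis unfolding fixpts_def by simp
qed

lemma card_fix_eq:
  assumes "j \<le> n"
  shows "real (card {\<pi>. \<pi> permutes {1..n} \<and> fixpts n \<pi> = j}) = fact n / fact j * bb (n - j)"
proof -
  have "real (card {\<pi>. \<pi> permutes {1..n} \<and> fixpts n \<pi> = j})
      = (\<Sum>F\<in>{F. F \<subseteq> {1..n} \<and> card F = j}. real (card (Der ({1..n} - F))))"
    using count_by_fixset[of "{1..n}" j] by (simp add: fixpts_fixset)
  also have "\<dots> = (\<Sum>F\<in>{F. F \<subseteq> {1..n} \<and> card F = j}. fact (n - j) * bb (n - j))"
  proof (intro sum.cong refl)
    fix F assume F: "F \<in> {F. F \<subseteq> {1..n} \<and> card F = j}"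
    hence "card ({1..n} - F) = n - j" by (auto simp: card_Diff_subset finite_subset)
    thus "real (card (Der ({1..n} - F))) = fact (n - j) * bb (n - j)"
      using card_Der[of "{1..n} - F"] by simp
  qed
  also have "\<dots> = of_nat (n choose j) * (fact (n - j) * bb (n - j))"
    using n_subsets[of "{1..n}" j] by simp
  also have "\<dots> = fact n / fact j * bb (n - j)"
    using assms by (simp add: binomial_fact field_simps)
  finally show ?thesis .
qed

lemma bb_nonneg: "0 \<le> bb m" and bb_le1: "bb m \<le> 1"
proof -
  have "real (card (Der {1..m})) = fact m * bb m" using card_Der[of "{1..m}"] by simp
  moreover have "card (Der {1..m}) \<le> card (PS m)"
    by (rule card_mono) (auto simp: Der_def finite_permutations)
  moreover have "card (PS m) = fact m" by (rule card_permutations) auto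
  ultimately have a: "fact m * bb m \<le> fact m * 1" and b: "fact m * 0 \<le> fact m * bb m"
    by (metis of_nat_fact of_nat_le_iff mult_1_right, simp)
  have fp: "(0::real) < fact m" by simp
  show "0 \<le> bb m" using b fp by (simp add: zero_le_mult_iff)
  show "bb m \<le> 1" using a fp by (simp only: mult_le_cancel_left_pos)
qed

lemma sum_fix:
  fixes h :: "nat \<Rightarrow> real"
  shows "(\<Sum>\<pi>\<in>PS n. h (fixpts n \<pi>)) = fact n * (\<Sum>j\<le>n. h j * bb (n - j) / fact j)"
proof -
  have "(\<Sum>\<pi>\<in>PS n. h (fixpts n \<pi>)) = (\<Sum>j\<le>n. \<Sum>\<pi>\<in>{\<pi>\<in>PS n. fixpts n \<pi> = j}. h (fixpts n \<pi>))"
    by (rule sum.group[symmetric]) (auto simp: finite_permutations fixpts_le)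
  also have "\<dots> = (\<Sum>j\<le>n. h j * real (card {\<pi>. \<pi> permutes {1..n} \<and> fixpts n \<pi> = j}))"
    by (intro sum.cong refl) simp
  also have "\<dots> = (\<Sum>j\<le>n. h j * (fact n / fact j * bb (n - j)))"
    by (rule sum.cong[OF refl], subst card_fix_eq) auto
  also have "\<dots> = fact n * (\<Sum>j\<le>n. h j * bb (n - j) / fact j)"
    by (simp add: sum_distrib_left field_simps)
  finally show ?thesis .
qed

lemma Zs_W: "Zs n t = fact n * W n t"
  unfolding Zs_def W_def using sum_fix[of "\<lambda>j. exp (t * real j)" n] by simp

lemma Zs_pos: "Zs n t > 0"
  unfolding Zs_def
  by (rule sum_pos) (auto simp: finite_permutations intro!: exI[of _ id] permutes_id)

lemma W_pos: "W n t > 0"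
  using Zs_pos[of n t] Zs_W[of n t] by (simp add: zero_less_mult_iff)

lemma pmf_R:
  "pmf (R_pmf n \<theta>) \<pi> = (if \<pi> permutes {1..n} then exp (\<theta> * real (fixpts n \<pi>)) / Zs n \<theta> else 0)"
proof -
  define f where "f = (\<lambda>\<pi>. if \<pi> permutes {1..n}
      then exp (\<theta> * real (fixpts n \<pi>) - logZ n \<theta>) else 0)"
  have lz: "logZ n \<theta> = ln (Zs n \<theta>)" unfolding logZ_def Zs_def by simp
  have fe: "f = (\<lambda>\<pi>. if \<pi> permutes {1..n} then exp (\<theta> * real (fixpts n \<pi>)) / Zs n \<theta> else 0)"
    unfolding f_def lz using Zs_pos[of n \<theta>] by (intro ext) (simp add: exp_diff)
  have "(\<integral>\<^sup>+x. ennreal (f x) \<partial>count_space UNIV) = (\<Sum>x\<in>PS n. ennreal (f x))"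
    by (rule nn_integral_count_space') (auto simp: finite_permutations f_def)
  also have "\<dots> = ennreal (\<Sum>x\<in>PS n. f x)"
    by (rule sum_ennreal) (auto simp: f_def)
  also have "(\<Sum>x\<in>PS n. f x) = (\<Sum>x\<in>PS n. exp (\<theta> * real (fixpts n x))) / Zs n \<theta>"
    unfolding fe by (simp add: sum_divide_distrib)
  also have "\<dots> = 1" using Zs_pos[of n \<theta>] unfolding Zs_def by simp
  finally have "(\<integral>\<^sup>+x. ennreal (f x) \<partial>count_space UNIV) = 1" by simp
  moreover have "\<And>x. 0 \<le> f x" by (simp add: f_def)
  ultimately have "pmf (embed_pmf f) \<pi> = f \<pi>" by (intro pmf_embed_pmf) auto
  thus ?thesis unfolding R_pmf_def f_def[symmetric] fe by simp
qed

lemma set_pmf_R: "set_pmf (R_pmf n \<theta>) \<subseteq> PS n"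
  by (auto simp: set_pmf_eq pmf_R split: if_splits)

lemma expect_R:
  fixes g :: "(nat \<Rightarrow> nat) \<Rightarrow> real"
  shows "measure_pmf.expectation (R_pmf n \<theta>) g
      = (\<Sum>\<pi>\<in>PS n. exp (\<theta> * real (fixpts n \<pi>)) / Zs n \<theta> * g \<pi>)"
  by (subst integral_measure_pmf_real[where A="PS n"])
     (use set_pmf_R[of n \<theta>] in \<open>auto simp: finite_permutations pmf_R mult.commute\<close>)

lemma prob_R:
  "measure_pmf.prob (R_pmf n \<theta>) A
      = (\<Sum>\<pi>\<in>PS n. exp (\<theta> * real (fixpts n \<pi>)) / Zs n \<theta> * (if \<pi> \<in> A then 1 else 0))"
proof -
  have "measure_pmf.prob (R_pmf n \<theta>) A = measure_pmf.prob (R_pmf n \<theta>) (A \<inter> PS n)"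
  proof -
    have "measure_pmf.prob (R_pmf n \<theta>) A = measure_pmf.prob (R_pmf n \<theta>) (A \<inter> set_pmf (R_pmf n \<theta>))"
      by (simp add: measure_Int_set_pmf)
    also have "A \<inter> set_pmf (R_pmf n \<theta>) = (A \<inter> PS n) \<inter> set_pmf (R_pmf n \<theta>)"
      using set_pmf_R[of n \<theta>] by auto
    finally show ?thesis by (simp add: measure_Int_set_pmf)
  qed
  also have "\<dots> = (\<Sum>\<pi>\<in>PS n \<inter> A. pmf (R_pmf n \<theta>) \<pi>)"
    by (subst Int_commute, rule measure_measure_pmf_finite) (auto simp: finite_permutations)
  also have "\<dots> = (\<Sum>\<pi>\<in>PS n. exp (\<theta> * real (fixpts n \<pi>)) / Zs n \<theta> * (if \<pi> \<in> A then 1 else 0))"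
    by (subst sum.inter_restrict) (auto simp: finite_permutations pmf_R intro!: sum.cong)
  finally show ?thesis .
qed

lemma expect_fix:
  fixes g :: "nat \<Rightarrow> real"
  shows "measure_pmf.expectation (R_pmf n \<theta>) (\<lambda>\<pi>. g (fixpts n \<pi>))
      = (\<Sum>j\<le>n. g j * exp (\<theta> * real j) * bb (n - j) / fact j) / W n \<theta>"
proof -
  have "measure_pmf.expectation (R_pmf n \<theta>) (\<lambda>\<pi>. g (fixpts n \<pi>))
      = (\<Sum>\<pi>\<in>PS n. (\<lambda>j. exp (\<theta> * real j) * g j / Zs n \<theta>) (fixpts n \<pi>))"
    by (simp add: expect_R)
  also have "\<dots> = fact n * (\<Sum>j\<le>n. exp (\<theta> * real j) * g j / Zs n \<theta> * bb (n - j) / fact j)"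
    by (rule sum_fix)
  also have "\<dots> = (\<Sum>j\<le>n. g j * exp (\<theta> * real j) * bb (n - j) / fact j) / W n \<theta>"
    unfolding Zs_W using W_pos[of n \<theta>]
    by (simp add: sum_distrib_left sum_divide_distrib field_simps)
  finally show ?thesis .
qed

lemma tann:
  fixes c :: "nat \<Rightarrow> real"
  assumes sc: "summable (\<lambda>j. norm (c j))"
  shows "(\<lambda>n. \<Sum>j\<le>n. c j * bb (n - j)) \<longlonglongrightarrow> exp (-1) * suminf c"
proof -
  define a where "a = (\<lambda>j n. if j \<le> n then c j * bb (n - j) else 0)"
  have lim: "(\<lambda>n. a j n) \<longlonglongrightarrow> c j * exp (-1)" for j
  proof -
    have "(\<lambda>n. bb (n - j)) \<longlonglongrightarrow> exp (-1)"
      by (rule filterlim_compose[OF bb_limit filterlim_minus_const_nat_at_top])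
    hence "(\<lambda>n. c j * bb (n - j)) \<longlonglongrightarrow> c j * exp (-1)" by (intro tendsto_mult tendsto_const)
    moreover have "eventually (\<lambda>n. c j * bb (n - j) = a j n) sequentially"
      unfolding a_def using eventually_ge_at_top[of j] by eventually_elim auto
    ultimately show ?thesis by (rule Lim_transform_eventually)
  qed
  have bound: "eventually (\<lambda>(k,n). norm (a k n) \<le> norm (c k)) (at_top \<times>\<^sub>F sequentially)"
  proof (rule always_eventually, clarify)
    fix k n
    show "norm (a k n) \<le> norm (c k)"
      unfolding a_def using bb_nonneg[of "n-k"] bb_le1[of "n-k"]
      by (auto simp: abs_mult intro: mult_left_le)
  qed
  have T: "(\<lambda>n. suminf (\<lambda>k. a k n)) \<longlonglongrightarrow> suminf (\<lambda>k. c k * exp (-1))"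
    using tannerys_theorem[OF lim bound sc] by simp
  have "suminf (\<lambda>k. a k n) = (\<Sum>j\<le>n. c j * bb (n - j))" for n
    by (subst suminf_finite[of "{..n}"]) (auto simp: a_def)
  moreover have "suminf (\<lambda>k. c k * exp (-1)) = exp (-1) * suminf c"
    using suminf_mult2[OF summable_norm_cancel[OF sc], of "exp (-1)"] by (simp add: mult.commute)
  ultimately show ?thesis using T by simp
qed

lemma summable_exp_like: "summable (\<lambda>j. norm ((x::real) ^ j / fact j))"
proof -
  have "norm (x ^ j / fact j) = \<bar>x\<bar> ^ j / fact j" for j by (simp add: power_abs)
  thus ?thesis using summable_exp[of "\<bar>x\<bar>"] by (simp add: divide_inverse mult.commute)
qed

lemma W_limit: "(\<lambda>n. W n t) \<longlonglongrightarrow> exp (-1) * exp (exp t)"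
proof -
  have e: "exp (t * real j) = exp t ^ j" for j by (simp add: exp_of_nat_mult[symmetric] mult.commute)
  have "(\<lambda>n. \<Sum>j\<le>n. exp t ^ j / fact j * bb (n - j)) \<longlonglongrightarrow> exp (-1) * (\<Sum>j. exp t ^ j / fact j)"
    by (rule tann[OF summable_exp_like])
  moreover have "(\<Sum>j. exp t ^ j / fact j) = exp (exp t)"
    using exp_converges[of "exp t"] by (simp add: sums_iff divide_inverse scaleR_conv_of_real mult.commute)
  moreover have "W n t = (\<Sum>j\<le>n. exp t ^ j / fact j * bb (n - j))" for n
    unfolding W_def e by (simp add: field_simps)
  ultimately show ?thesis by simp
qed

lemma W_bound: "W n t \<le> exp (exp t)"
proof -
  have "W n t \<le> (\<Sum>j\<le>n. exp t ^ j / fact j)"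
    unfolding W_def
  proof (rule sum_mono)
    fix j
    have "exp (t * real j) * bb (n - j) / fact j \<le> exp (t * real j) * 1 / fact j"
      using bb_le1 by (intro divide_right_mono mult_left_mono) auto
    thus "exp (t * real j) * bb (n - j) / fact j \<le> exp t ^ j / fact j"
      by (simp add: exp_of_nat_mult[symmetric] mult.commute)
  qed
  also have "\<dots> \<le> (\<Sum>j. exp t ^ j / fact j)"
    by (rule sum_le_suminf) (use summable_exp[of "exp t"] in \<open>auto simp: divide_inverse mult.commute\<close>)
  also have "\<dots> = exp (exp t)"
    using exp_converges[of "exp t"] by (simp add: sums_iff divide_inverse scaleR_conv_of_real mult.commute)
  finally show ?thesis .
qed

lemma exp_pow: "exp (t * real j) = exp t ^ j"
  by (simp add: exp_of_nat_mult[symmetric] mult.commute)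

lemma ratio_limit:
  fixes c :: "nat \<Rightarrow> real"
  assumes sc: "summable (\<lambda>j. norm (c j))"
  shows "(\<lambda>n. (\<Sum>j\<le>n. c j * bb (n - j)) / W n \<theta>) \<longlonglongrightarrow> suminf c * exp (- exp \<theta>)"
proof -
  have "(\<lambda>n. (\<Sum>j\<le>n. c j * bb (n - j)) / W n \<theta>) \<longlonglongrightarrow> (exp (-1) * suminf c) / (exp (-1) * exp (exp \<theta>))"
    by (intro tendsto_divide tann sc W_limit) simp
  also have "(exp (-1) * suminf c) / (exp (-1) * exp (exp \<theta>)) = suminf c * exp (- exp \<theta>)"
    by (simp add: exp_minus field_simps)
  finally show ?thesis .
qed

lemma expect_fix':
  fixes g :: "nat \<Rightarrow> real"
  shows "measure_pmf.expectation (R_pmf n \<theta>) (\<lambda>\<pi>. g (fixpts n \<pi>))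
      = (\<Sum>j\<le>n. (g j * exp \<theta> ^ j / fact j) * bb (n - j)) / W n \<theta>"
  unfolding expect_fix exp_pow by (simp add: field_simps)

lemma prob_fix:
  "measure_pmf.prob (R_pmf n \<theta>) {\<pi>. P (fixpts n \<pi>)}
      = (\<Sum>j\<le>n. ((if P j then 1 else 0) * exp \<theta> ^ j / fact j) * bb (n - j)) / W n \<theta>"
proof -
  have "measure_pmf.prob (R_pmf n \<theta>) {\<pi>. P (fixpts n \<pi>)}
     = measure_pmf.expectation (R_pmf n \<theta>) (\<lambda>\<pi>. (\<lambda>j. if P j then 1 else 0) (fixpts n \<pi>))"
    unfolding prob_R expect_R by simp
  thus ?thesis using expect_fix'[where g="\<lambda>j. if P j then 1 else 0" and n=n and \<theta>=\<theta>] by simp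
qed

lemma pow_le_fact_exp: "real j ^ k \<le> fact k * exp (real j)"
proof -
  have "real j ^ k / fact k \<le> (\<Sum>i. real j ^ i / fact i)"
    using sum_le_suminf[of "\<lambda>i. real j ^ i / fact i" "{k}"] summable_exp[of "real j"]
    by (simp add: divide_inverse mult.commute)
  also have "\<dots> = exp (real j)"
    using exp_converges[of "real j"] by (simp add: sums_iff divide_inverse scaleR_conv_of_real mult.commute)
  finally show ?thesis by (simp add: field_simps)
qed

lemma summable_moment:
  assumes "x \<ge> 0"
  shows "summable (\<lambda>j. norm (real j ^ k * x ^ j / fact j))"
proof (rule summable_comparison_test'[where N=0])
  show "summable (\<lambda>j. fact k * ((exp 1 * x) ^ j / fact j))"
    using summable_exp[of "exp 1 * x"] by (intro summable_mult) (simp add: divide_inverse mult.commute)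
  fix j :: nat
  show "norm (norm (real j ^ k * x ^ j / fact j)) \<le> fact k * ((exp 1 * x) ^ j / fact j)"
  proof -
  have "norm (real j ^ k * x ^ j / fact j) = real j ^ k * x ^ j / fact j" using assms by simp
  also have "\<dots> \<le> fact k * exp (real j) * x ^ j / fact j"
    using pow_le_fact_exp[of j k] assms by (intro divide_right_mono mult_right_mono) auto
  also have "exp (real j) = exp 1 ^ j" using exp_pow[of 1 j] by simp
  finally show ?thesis
    by (simp add: power_mult_distrib)
  qed
qed

lemma poisson_moment:
  assumes x: "x > 0"
  shows "measure_pmf.expectation (poisson_pmf x) (\<lambda>m. real m ^ k)
       = (\<Sum>j. real j ^ k * x ^ j / fact j) * exp (- x)"
proof -
  have "measure_pmf.expectation (poisson_pmf x) (\<lambda>m. real m ^ k)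
      = integral\<^sup>L (count_space UNIV) (\<lambda>m. pmf (poisson_pmf x) m *\<^sub>R real m ^ k)"
    unfolding measure_pmf_eq_density by (subst integral_density) (auto simp: pmf_nonneg)
  also have "\<dots> = (\<Sum>m. pmf (poisson_pmf x) m *\<^sub>R real m ^ k)"
  proof (rule integral_count_space_nat)
    have "summable (\<lambda>j. norm (real j ^ k * x ^ j / fact j) * exp (-x))"
      by (intro summable_mult2 summable_moment) (use x in auto)
    thus "integrable (count_space UNIV) (\<lambda>m. pmf (poisson_pmf x) m *\<^sub>R real m ^ k)"
      unfolding integrable_count_space_nat_iff using x by (simp add: field_simps)
  qed
  also have "\<dots> = (\<Sum>j. real j ^ k * x ^ j / fact j * exp (- x))"
    using x by (simp add: field_simps)
  also have "\<dots> = (\<Sum>j. real j ^ k * x ^ j / fact j) * exp (- x)"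
    by (rule suminf_mult2[symmetric]) (use summable_moment[of x k] x in \<open>auto dest: summable_norm_cancel\<close>)
  finally show ?thesis .
qed

lemma moments_conv:
  "(\<lambda>n. measure_pmf.expectation (R_pmf n \<theta>) (\<lambda>\<pi>. real (fixpts n \<pi>) ^ k))
      \<longlonglongrightarrow> measure_pmf.expectation (poisson_pmf (exp \<theta>)) (\<lambda>m. real m ^ k)"
  unfolding expect_fix'[where g="\<lambda>j. real j ^ k"] poisson_moment[OF exp_gt_zero]
  by (rule ratio_limit[OF summable_moment]) simp

lemma cdf_R:
  "cdf (distr (measure_pmf (R_pmf n \<theta>)) borel (\<lambda>\<pi>. real (fixpts n \<pi>))) x
    = measure_pmf.prob (R_pmf n \<theta>) {\<pi>. real (fixpts n \<pi>) \<le> x}"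
  unfolding cdf_def2 by (subst measure_distr) (auto intro: arg_cong2[where f=measure])

lemma cdf_P:
  "cdf (distr (measure_pmf (poisson_pmf r)) borel real) x
    = measure_pmf.prob (poisson_pmf r) {m. real m \<le> x}"
  unfolding cdf_def2 by (subst measure_distr) (auto intro: arg_cong2[where f=measure])

lemma finite_le_x: "finite {m::nat. real m \<le> x}"
proof (rule finite_subset[of _ "{..nat \<lceil>x\<rceil>}"])
  show "{m::nat. real m \<le> x} \<subseteq> {..nat \<lceil>x\<rceil>}"
  proof
    fix m assume "m \<in> {m::nat. real m \<le> x}"
    hence "real m \<le> x" by simp
    hence "real_of_int (int m) \<le> real_of_int \<lceil>x\<rceil>" using le_of_int_ceiling[of x] by linarith
    hence "int m \<le> \<lceil>x\<rceil>" by (simp only: of_int_le_iff)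
    thus "m \<in> {..nat \<lceil>x\<rceil>}" by simp
  qed
qed simp

lemma weak_part:
  "weak_conv_m (\<lambda>n. distr (measure_pmf (R_pmf n \<theta>)) borel (\<lambda>\<pi>. real (fixpts n \<pi>)))
                     (distr (measure_pmf (poisson_pmf (exp \<theta>))) borel real)"
  unfolding weak_conv_m_def weak_conv_def
proof (intro allI impI)
  fix x :: real
  define J where "J = {m::nat. real m \<le> x}"
  have fJ: "finite J" unfolding J_def by (rule finite_le_x)
  define c where "c = (\<lambda>j::nat. (if real j \<le> x then 1 else 0) * exp \<theta> ^ j / fact j)"
  have sc: "summable (\<lambda>j. norm (c j))"
    by (rule summable_comparison_test'[OF summable_exp_like[of "exp \<theta>"]]) (auto simp: c_def)
  have "(\<lambda>n. measure_pmf.prob (R_pmf n \<theta>) {\<pi>. real (fixpts n \<pi>) \<le> x}) \<longlonglongrightarrow> suminf c * exp (- exp \<theta>)"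
    using ratio_limit[OF sc, of \<theta>] prob_fix[where P="\<lambda>j. real j \<le> x" and \<theta>=\<theta>] by (simp add: c_def)
  also have "suminf c = (\<Sum>j\<in>J. exp \<theta> ^ j / fact j)"
    by (subst suminf_finite[OF fJ]) (auto simp: c_def J_def)
  also have "(\<Sum>j\<in>J. exp \<theta> ^ j / fact j) * exp (- exp \<theta>) = measure_pmf.prob (poisson_pmf (exp \<theta>)) J"
    by (subst measure_measure_pmf_finite[OF fJ]) (simp add: sum_distrib_right)
  finally show "(\<lambda>n. cdf (distr (measure_pmf (R_pmf n \<theta>)) borel (\<lambda>\<pi>. real (fixpts n \<pi>))) x)
    \<longlonglongrightarrow> cdf (distr (measure_pmf (poisson_pmf (exp \<theta>))) borel real) x"
    unfolding cdf_R cdf_P J_def .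
qed

lemma sum_restrict_PS:
  "(\<Sum>\<pi>\<in>PS n. f \<pi> * (if \<pi> \<in> A then 1 else 0)) = (\<Sum>\<pi>\<in>{\<pi>\<in>PS n. \<pi> \<in> A}. (f \<pi> :: real))"
proof -
  have "{\<pi>\<in>PS n. \<pi> \<in> A} = PS n \<inter> A" by auto
  thus ?thesis by (simp add: sum.inter_restrict finite_permutations if_distrib cong: if_cong)
qed

lemma part_c:
  assumes n: "n \<ge> 2"
  shows "measure_pmf.prob (R_pmf n \<theta>) {\<pi>. \<pi> 1 = 1 \<and> \<pi> 2 = 2}
       / measure_pmf.prob (R_pmf n \<theta>) {\<pi>. \<pi> 1 = 2 \<and> \<pi> 2 = 1} = exp (2 * \<theta>)"
proof -
  define \<tau> :: "nat \<Rightarrow> nat" where "\<tau> = Transposition.transpose 1 2"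
  define SA where "SA = {\<pi>\<in>PS n. \<pi> \<in> {\<pi>. \<pi> 1 = 1 \<and> \<pi> 2 = 2}}"
  define SB where "SB = {\<pi>\<in>PS n. \<pi> \<in> {\<pi>. \<pi> 1 = 2 \<and> \<pi> 2 = 1}}"
  define e where "e = (\<lambda>\<pi>. exp (\<theta> * real (fixpts n \<pi>)))"
  have tp: "\<tau> permutes {1..n}" unfolding \<tau>_def using n by (intro permutes_swap_id) auto
  have tt: "\<tau> \<circ> \<tau> = id" unfolding \<tau>_def by (simp add: fun_eq_iff Transposition.transpose_def)
  have fixrel: "fixpts n \<pi> = fixpts n (\<pi> \<circ> \<tau>) + 2" if "\<pi> \<in> SA" for \<pi>
  proof -
    have p1: "\<pi> 1 = 1" and p2: "\<pi> 2 = 2" using that by (auto simp: SA_def)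
    define X where "X = {i\<in>{3..n}. \<pi> i = i}"
    have "{i\<in>{1..n}. \<pi> i = i} = insert 1 (insert 2 X)"
      using n p1 p2 by (auto simp: X_def)
    moreover have "{i\<in>{1..n}. (\<pi> \<circ> \<tau>) i = i} = X"
      using n p1 p2 by (auto simp: X_def \<tau>_def Transposition.transpose_def)
    moreover have "card (insert 1 (insert 2 X)) = card X + 2"
      by (simp add: X_def)
    ultimately show ?thesis unfolding fixpts_def by simp
  qed
  have "(\<Sum>\<pi>\<in>SA. e \<pi>) = (\<Sum>\<sigma>\<in>SB. e (\<sigma> \<circ> \<tau>))"
  proof (rule sum.reindex_bij_witness[where i="\<lambda>\<sigma>. \<sigma> \<circ> \<tau>" and j="\<lambda>\<pi>. \<pi> \<circ> \<tau>"])
    fix \<pi> assume "\<pi> \<in> SA"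
    thus "\<pi> \<circ> \<tau> \<circ> \<tau> = \<pi>" using tt by (simp add: comp_assoc)
    show "\<pi> \<circ> \<tau> \<in> SB" using \<open>\<pi> \<in> SA\<close> tp
      by (auto simp: SA_def SB_def \<tau>_def permutes_compose)
    show "e (\<pi> \<circ> \<tau> \<circ> \<tau>) = e \<pi>" using tt by (simp add: comp_assoc)
  next
    fix \<sigma> assume "\<sigma> \<in> SB"
    thus "\<sigma> \<circ> \<tau> \<circ> \<tau> = \<sigma>" using tt by (simp add: comp_assoc)
    show "\<sigma> \<circ> \<tau> \<in> SA" using \<open>\<sigma> \<in> SB\<close> tp
      by (auto simp: SA_def SB_def \<tau>_def permutes_compose)
  qed
  also have "\<dots> = (\<Sum>\<sigma>\<in>SB. exp (2 * \<theta>) * e \<sigma>)"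
  proof (intro sum.cong refl)
    fix \<sigma> assume s: "\<sigma> \<in> SB"
    have "\<sigma> \<circ> \<tau> \<in> SA" using s tp by (auto simp: SA_def SB_def \<tau>_def permutes_compose)
    hence "fixpts n (\<sigma> \<circ> \<tau>) = fixpts n (\<sigma> \<circ> \<tau> \<circ> \<tau>) + 2" by (rule fixrel)
    also have "\<sigma> \<circ> \<tau> \<circ> \<tau> = \<sigma>" using tt by (simp add: comp_assoc)
    finally have "real (fixpts n (\<sigma> \<circ> \<tau>)) = real (fixpts n \<sigma>) + 2" by (simp only: of_nat_add of_nat_numeral)
    hence "\<theta> * real (fixpts n (\<sigma> \<circ> \<tau>)) = 2 * \<theta> + \<theta> * real (fixpts n \<sigma>)" by (simp add: algebra_simps)
    thus "e (\<sigma> \<circ> \<tau>) = exp (2 * \<theta>) * e \<sigma>"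
      unfolding e_def by (simp add: exp_add)
  qed
  finally have eq: "(\<Sum>\<pi>\<in>SA. e \<pi>) = exp (2 * \<theta>) * (\<Sum>\<sigma>\<in>SB. e \<sigma>)"
    by (simp add: sum_distrib_left)
  have "\<tau> \<in> SB" using tp by (auto simp: SB_def \<tau>_def)
  moreover have "finite SB" unfolding SB_def by (auto simp: finite_permutations)
  ultimately have pos: "(\<Sum>\<sigma>\<in>SB. e \<sigma>) > 0"
    by (intro sum_pos2[of _ \<tau>]) (auto simp: e_def)
  have pA: "measure_pmf.prob (R_pmf n \<theta>) {\<pi>. \<pi> 1 = 1 \<and> \<pi> 2 = 2} = (\<Sum>\<pi>\<in>SA. e \<pi>) / Zs n \<theta>"
    unfolding prob_R sum_restrict_PS SA_def[symmetric] e_def by (simp add: sum_divide_distrib)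
  have pB: "measure_pmf.prob (R_pmf n \<theta>) {\<pi>. \<pi> 1 = 2 \<and> \<pi> 2 = 1} = (\<Sum>\<pi>\<in>SB. e \<pi>) / Zs n \<theta>"
    unfolding prob_R sum_restrict_PS SB_def[symmetric] e_def by (simp add: sum_divide_distrib)
  show ?thesis unfolding pA pB eq using pos Zs_pos[of n \<theta>] by (simp add: field_simps)
qed

lemma perm_sum1:
  fixes h :: "'a \<Rightarrow> real"
  assumes S: "finite S" and a: "a \<in> S"
  shows "(\<Sum>\<pi>\<in>{\<pi>. \<pi> permutes S}. h (\<pi> a)) = fact (card S - 1) * (\<Sum>k\<in>S. h k)"
proof -
  define S' where "S' = S - {a}"
  have SS: "S = insert a S'" and aS': "a \<notin> S'" and fS': "finite S'" using a S by (auto simp: S'_def)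
  have cS: "card S' = card S - 1" using a S by (simp add: S'_def)
  have "(\<Sum>\<pi>\<in>{\<pi>. \<pi> permutes S}. h (\<pi> a))
      = (\<Sum>b\<in>insert a S'. \<Sum>q\<in>{p. p permutes S'}. h ((Transposition.transpose a b \<circ> q) a))"
    unfolding SS by (rule sum_over_permutations_insert[OF fS' aS'])
  also have "\<dots> = (\<Sum>b\<in>insert a S'. \<Sum>q\<in>{p. p permutes S'}. h b)"
  proof (intro sum.cong refl)
    fix b q assume "q \<in> {p. p permutes S'}"
    hence "q a = a" using aS' by (auto intro: permutes_not_in)
    thus "h ((Transposition.transpose a b \<circ> q) a) = h b" by simp
  qed
  also have "\<dots> = (\<Sum>b\<in>S. fact (card S - 1) * h b)"
    using card_permutations[OF refl fS'] cS SS by simp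
  finally show ?thesis by (simp add: sum_distrib_left)
qed

lemma perm_sum2:
  fixes g :: "'a \<Rightarrow> 'a \<Rightarrow> real"
  assumes S: "finite S" and a: "a \<in> S" and a': "a' \<in> S" and aa: "a \<noteq> a'"
  shows "(\<Sum>\<pi>\<in>{\<pi>. \<pi> permutes S}. g (\<pi> a) (\<pi> a'))
       = fact (card S - 2) * (\<Sum>j\<in>S. \<Sum>k\<in>S - {j}. g j k)"
proof -
  define S' where "S' = S - {a}"
  have SS: "S = insert a S'" and aS': "a \<notin> S'" and fS': "finite S'" using a S by (auto simp: S'_def)
  have a'S': "a' \<in> S'" using a' aa by (auto simp: S'_def)
  have cS: "card S' - 1 = card S - 2" using a S by (simp add: S'_def)
  have "(\<Sum>\<pi>\<in>{\<pi>. \<pi> permutes S}. g (\<pi> a) (\<pi> a'))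
      = (\<Sum>b\<in>insert a S'. \<Sum>q\<in>{p. p permutes S'}.
           g ((Transposition.transpose a b \<circ> q) a) ((Transposition.transpose a b \<circ> q) a'))"
    unfolding SS by (rule sum_over_permutations_insert[OF fS' aS'])
  also have "\<dots> = (\<Sum>b\<in>S. \<Sum>q\<in>{p. p permutes S'}. g b (Transposition.transpose a b (q a')))"
  proof (unfold SS[symmetric], intro sum.cong refl)
    fix b q assume "q \<in> {p. p permutes S'}"
    hence "q a = a" using aS' by (auto intro: permutes_not_in)
    thus "g ((Transposition.transpose a b \<circ> q) a) ((Transposition.transpose a b \<circ> q) a')
        = g b (Transposition.transpose a b (q a'))" by simp
  qed
  also have "\<dots> = (\<Sum>b\<in>S. fact (card S - 2) * (\<Sum>k\<in>S'. g b (Transposition.transpose a b k)))"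
    by (intro sum.cong refl) (subst perm_sum1[OF fS' a'S'], simp only: cS)
  also have "\<dots> = (\<Sum>b\<in>S. fact (card S - 2) * (\<Sum>k\<in>S - {b}. g b k))"
  proof (rule sum.cong[OF refl])
    fix b assume b: "b \<in> S"
    have "(\<Sum>k\<in>S'. g b (Transposition.transpose a b k)) = (\<Sum>k\<in>S - {b}. g b k)"
      by (rule sum.reindex_bij_witness[where i="Transposition.transpose a b" and j="Transposition.transpose a b"])
         (use b a in \<open>auto simp: S'_def Transposition.transpose_def split: if_splits\<close>)
    thus "fact (card S - 2) * (\<Sum>k\<in>S'. g b (Transposition.transpose a b k)) = fact (card S - 2) * (\<Sum>k\<in>S - {b}. g b k)" by simp
  qed
  finally show ?thesis by (simp add: sum_distrib_left)
qed

lemma riemann_1d: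
  fixes g :: "real \<Rightarrow> real"
  assumes cont: "continuous_on {0..1} g" and n: "n > 0"
    and eta: "\<And>x y. x \<in> {0..1} \<Longrightarrow> y \<in> {0..1} \<Longrightarrow> \<bar>x - y\<bar> \<le> 1 / real n \<Longrightarrow> \<bar>g x - g y\<bar> \<le> \<eta>"
  shows "\<bar>integral {0..1} g - (\<Sum>i=1..n. g (real i / real n)) / real n\<bar> \<le> \<eta>"
proof -
  define I where "I = (\<lambda>i::nat. integral {(real i - 1) / real n .. real i / real n} g)"
  have intg: "g integrable_on {a..b}" if "0 \<le> a" "b \<le> 1" for a b
    by (rule integrable_continuous_interval, rule continuous_on_subset[OF cont]) (use that in auto)
  have split: "k \<le> n \<Longrightarrow> integral {0..real k / real n} g = (\<Sum>i=1..k. I i)" for k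
  proof (induction k)
    case 0 thus ?case by simp
  next
    case (Suc k)
    have "integral {0..real k / real n} g + integral {real k / real n..real (Suc k) / real n} g
        = integral {0..real (Suc k) / real n} g"
      by (rule Henstock_Kurzweil_Integration.integral_combine) (use Suc.prems n in \<open>auto intro!: intg divide_right_mono simp: field_simps\<close>)
    moreover have "integral {real k / real n..real (Suc k) / real n} g = I (Suc k)"
      unfolding I_def by simp
    ultimately show ?case using Suc by simp
  qed
  have piece: "\<bar>I i - g (real i / real n) / real n\<bar> \<le> \<eta> / real n" if i: "i \<in> {1..n}" for i
  proof -
    define a where "a = (real i - 1) / real n"
    define b where "b = real i / real n"
    have ab: "0 \<le> a" "a \<le> b" "b \<le> 1" "b - a = 1 / real n"
      using i n by (auto simp: a_def b_def field_simps)
    have close: "\<bar>g x - g b\<bar> \<le> \<eta>" if "x \<in> {a..b}" for x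
      by (rule eta) (use that ab in auto)
    have lo: "g b - \<eta> \<le> g x" and hi: "g x \<le> g b + \<eta>" if "x \<in> {a..b}" for x
      using close[OF that] unfolding abs_le_iff by linarith+
    have "integral {a..b} (\<lambda>x. g b - \<eta>) \<le> integral {a..b} g"
      by (rule integral_le) (use lo ab in \<open>auto intro!: intg\<close>)
    moreover have "integral {a..b} g \<le> integral {a..b} (\<lambda>x. g b + \<eta>)"
      by (rule integral_le) (use hi ab in \<open>auto intro!: intg\<close>)
    ultimately have "(b - a) * (g b - \<eta>) \<le> I i" "I i \<le> (b - a) * (g b + \<eta>)"
      using ab by (auto simp: I_def a_def b_def)
    hence l: "(1 / real n) * (g b - \<eta>) \<le> I i" and u: "I i \<le> (1 / real n) * (g b + \<eta>)"
      unfolding ab(4) by auto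
    have e1: "(1 / real n) * (g b - \<eta>) = g b / real n - \<eta> / real n"
      and e2: "(1 / real n) * (g b + \<eta>) = g b / real n + \<eta> / real n" by (simp_all add: diff_divide_distrib add_divide_distrib)
    have "\<bar>I i - g b / real n\<bar> \<le> \<eta> / real n" using l u unfolding e1 e2 abs_le_iff by linarith
    thus ?thesis unfolding b_def .
  qed
  have "integral {0..1} g = (\<Sum>i=1..n. I i)" using split[of n] n by simp
  hence "integral {0..1} g - (\<Sum>i=1..n. g (real i / real n)) / real n
       = (\<Sum>i=1..n. I i - g (real i / real n) / real n)"
    by (simp add: sum_subtractf sum_divide_distrib)
  hence "\<bar>integral {0..1} g - (\<Sum>i=1..n. g (real i / real n)) / real n\<bar>
       \<le> (\<Sum>i=1..n. \<bar>I i - g (real i / real n) / real n\<bar>)" by (simp add: sum_abs)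
  also have "\<dots> \<le> (\<Sum>i=1..n. \<eta> / real n)" by (rule sum_mono) (rule piece)
  also have "\<dots> = \<eta>" using n by simp
  finally show ?thesis .
qed

definition Rs :: "(real \<times> real \<Rightarrow> real) \<Rightarrow> nat \<Rightarrow> real" where
  "Rs f n = (\<Sum>i=1..n. (\<Sum>j=1..n. f (real i / real n, real j / real n)) / real n) / real n"

lemma memQ: "(x, y) \<in> cbox (0,0) (1::real,1::real) \<longleftrightarrow> x \<in> {0..1} \<and> y \<in> {0..1}"
  by (simp add: cbox_Pair_iff)

lemma riemann_2d:
  fixes f :: "real \<times> real \<Rightarrow> real"
  assumes cont: "continuous_on (cbox (0,0) (1,1)) f"
  shows "Rs f \<longlonglongrightarrow> integral (cbox (0,0) (1,1)) f"
proof -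
  define Q :: "(real \<times> real) set" where "Q = cbox (0,0) (1,1)"
  define H where "H = (\<lambda>x. integral {0..1} (\<lambda>y. f (x, y)))"
  have I: "integral Q f = integral {0..1} H"
    unfolding Q_def H_def using integral_prod_continuous[OF cont] by simp
  have uc: "uniformly_continuous_on Q f"
    unfolding Q_def by (rule compact_uniformly_continuous[OF cont compact_cbox])
  have contx: "continuous_on {0..1} (\<lambda>y. f (x, y))" if "x \<in> {0..1}" for x
    by (rule continuous_on_compose2[OF cont]) (use that in \<open>auto intro!: continuous_intros simp: memQ\<close>)
  have key: "\<exists>\<delta>>0. (\<forall>x\<in>{0..1}. \<forall>x'\<in>{0..1}. \<bar>x - x'\<bar> < \<delta> \<longrightarrow> \<bar>H x - H x'\<bar> \<le> \<eta>) \<and>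
                   (\<forall>x\<in>{0..1}. \<forall>y\<in>{0..1}. \<forall>y'\<in>{0..1}. \<bar>y - y'\<bar> < \<delta> \<longrightarrow> \<bar>f (x,y) - f (x,y')\<bar> \<le> \<eta>)"
    if eta: "\<eta> > 0" for \<eta>
  proof -
    obtain \<delta> where d: "\<delta> > 0" and dd: "\<And>p q. p \<in> Q \<Longrightarrow> q \<in> Q \<Longrightarrow> dist q p < \<delta> \<Longrightarrow> dist (f q) (f p) < \<eta>"
      using uc eta unfolding uniformly_continuous_on_def by metis
    have fx: "\<bar>f (x,y) - f (x',y)\<bar> \<le> \<eta>" if "x \<in> {0..1}" "x' \<in> {0..1}" "y \<in> {0..1}" "\<bar>x - x'\<bar> < \<delta>" for x x' y
    proof -
      have "dist (x,y) (x',y) < \<delta>" using that by (simp add: dist_Pair_Pair dist_real_def)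
      hence "dist (f (x,y)) (f (x',y)) < \<eta>" using dd[of "(x',y)" "(x,y)"] that by (simp add: memQ Q_def)
      thus ?thesis by (simp add: dist_real_def)
    qed
    have fy: "\<bar>f (x,y) - f (x,y')\<bar> \<le> \<eta>" if "x \<in> {0..1}" "y \<in> {0..1}" "y' \<in> {0..1}" "\<bar>y - y'\<bar> < \<delta>" for x y y'
    proof -
      have "dist (x,y) (x,y') < \<delta>" using that by (simp add: dist_Pair_Pair dist_real_def)
      hence "dist (f (x,y)) (f (x,y')) < \<eta>" using dd[of "(x,y')" "(x,y)"] that by (simp add: memQ Q_def)
      thus ?thesis by (simp add: dist_real_def)
    qed
    have hx: "\<bar>H x - H x'\<bar> \<le> \<eta>" if xx: "x \<in> {0..1}" "x' \<in> {0..1}" "\<bar>x - x'\<bar> < \<delta>" for x x'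
    proof -
      have b1: "f (x,y) \<le> f (x',y) + \<eta>" and b2: "f (x',y) \<le> f (x,y) + \<eta>" if "y \<in> {0..1}" for y
        using fx[OF xx(1,2) that xx(3)] unfolding abs_le_iff by linarith+
      have i1: "(\<lambda>y. f (x, y)) integrable_on {0..1}" and i2: "(\<lambda>y. f (x', y)) integrable_on {0..1}"
        using contx that by (auto intro: integrable_continuous_interval)
      have "H x \<le> integral {0..1} (\<lambda>y. f (x', y) + \<eta>)"
        unfolding H_def by (rule integral_le[OF i1 integrable_add[OF i2 integrable_const_ivl]])
          (use b1 in auto)
      moreover have "H x' \<le> integral {0..1} (\<lambda>y. f (x, y) + \<eta>)"
        unfolding H_def by (rule integral_le[OF i2 integrable_add[OF i1 integrable_const_ivl]])
          (use b2 in auto)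
      moreover have "integral {0..1} (\<lambda>y. f (x', y) + \<eta>) = H x' + \<eta>"
        unfolding H_def by (subst integral_add[OF i2 integrable_const_ivl]) simp
      moreover have "integral {0..1} (\<lambda>y. f (x, y) + \<eta>) = H x + \<eta>"
        unfolding H_def by (subst integral_add[OF i1 integrable_const_ivl]) simp
      ultimately show ?thesis by (simp add: abs_le_iff)
    qed
    show ?thesis using d hx fy by blast
  qed
  have contH: "continuous_on {0..1} H"
    unfolding continuous_on_iff
  proof (intro ballI allI impI)
    fix x e assume x: "x \<in> {0..1::real}" and e: "(0::real) < e"
    obtain \<delta> where d: "\<delta> > 0" and hd: "\<forall>x\<in>{0..1}. \<forall>x'\<in>{0..1}. \<bar>x - x'\<bar> < \<delta> \<longrightarrow> \<bar>H x - H x'\<bar> \<le> e/2"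
      using key[of "e/2"] e by auto
    show "\<exists>d>0. \<forall>x'\<in>{0..1}. dist x' x < d \<longrightarrow> dist (H x') (H x) < e"
      using d hd x e by (intro exI[of _ \<delta>]) (force simp: dist_real_def)
  qed
  show ?thesis
  proof (rule LIMSEQ_I)
    fix r :: real assume r: "r > 0"
    obtain \<delta> where d: "\<delta> > 0"
      and hd: "\<forall>x\<in>{0..1}. \<forall>x'\<in>{0..1}. \<bar>x - x'\<bar> < \<delta> \<longrightarrow> \<bar>H x - H x'\<bar> \<le> r/3"
      and fd: "\<forall>x\<in>{0..1}. \<forall>y\<in>{0..1}. \<forall>y'\<in>{0..1}. \<bar>y - y'\<bar> < \<delta> \<longrightarrow> \<bar>f (x,y) - f (x,y')\<bar> \<le> r/3"
      using key[of "r/3"] r by auto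
    obtain N :: nat where N: "N > 0" "inverse (real N) < \<delta>" using ex_inverse_of_nat_less[OF d] by auto
    show "\<exists>no. \<forall>n\<ge>no. norm (Rs f n - integral (cbox (0, 0) (1, 1)) f) < r"
    proof (intro exI allI impI)
      fix n assume nN: "N \<le> n"
      hence n: "n > 0" using N by simp
      have small: "1 / real n < \<delta>"
      proof -
        have "1 / real n \<le> inverse (real N)" using nN N by (simp add: divide_simps)
        thus ?thesis using N by simp
      qed
      have inner: "\<bar>H (real i / real n) - (\<Sum>j=1..n. f (real i / real n, real j / real n)) / real n\<bar> \<le> r/3"
        if i: "i \<in> {1..n}" for i
      proof -
        have xi: "real i / real n \<in> {0..1}" using i by auto
        show ?thesis unfolding H_def
          by (rule riemann_1d[OF contx[OF xi] n]) (use fd xi small in auto)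
      qed
      have outer: "\<bar>integral {0..1} H - (\<Sum>i=1..n. H (real i / real n)) / real n\<bar> \<le> r/3"
        by (rule riemann_1d[OF contH n]) (use hd small in auto)
      have "Rs f n - integral Q f = (\<Sum>i=1..n. (\<Sum>j=1..n. f (real i / real n, real j / real n)) / real n - H (real i / real n)) / real n
              + ((\<Sum>i=1..n. H (real i / real n)) / real n - integral {0..1} H)"
        unfolding Rs_def I by (simp add: sum_subtractf diff_divide_distrib)
      moreover have "\<bar>(\<Sum>i=1..n. (\<Sum>j=1..n. f (real i / real n, real j / real n)) / real n - H (real i / real n)) / real n\<bar> \<le> r/3"
      proof -
        have "\<bar>\<Sum>i=1..n. (\<Sum>j=1..n. f (real i / real n, real j / real n)) / real n - H (real i / real n)\<bar>
            \<le> (\<Sum>i=1..n. r/3)"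
          by (rule order.trans[OF sum_abs sum_mono]) (use inner in \<open>auto simp: abs_minus_commute\<close>)
        also have "\<dots> = real n * (r/3)" by simp
        finally show ?thesis using n by (simp add: divide_simps mult.commute)
      qed
      ultimately have "\<bar>Rs f n - integral Q f\<bar> \<le> r/3 + r/3" using outer by linarith
      thus "norm (Rs f n - integral (cbox (0, 0) (1, 1)) f) < r" using r by (simp add: Q_def)
    qed
  qed
qed

lemma fact_rel: "n \<ge> 2 \<Longrightarrow> (fact n :: real) = real n * (real n - 1) * fact (n - 2)"
proof -
  assume "n \<ge> 2"
  then obtain m where m: "n = Suc (Suc m)" by (metis add_2_eq_Suc le_Suc_ex)
  show ?thesis unfolding m by (simp add: algebra_simps)
qed

lemma card_PS: "card (PS n) = fact n"
  by (rule card_permutations) auto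

lemma card_PS': "card {\<sigma>. \<sigma> permutes {Suc 0..n}} = fact n"
  by (rule card_permutations) auto

definition Tg :: "(nat \<Rightarrow> nat \<Rightarrow> real) \<Rightarrow> nat \<Rightarrow> (nat \<Rightarrow> nat) \<Rightarrow> real" where
  "Tg g n \<pi> = (1 / real n) * (\<Sum>i=1..n. g i (\<pi> i))"
definition Ag :: "(nat \<Rightarrow> nat \<Rightarrow> real) \<Rightarrow> nat \<Rightarrow> nat \<Rightarrow> real" where
  "Ag g n i = (\<Sum>j=1..n. g i j)"
definition Rg :: "(nat \<Rightarrow> nat \<Rightarrow> real) \<Rightarrow> nat \<Rightarrow> real" where
  "Rg g n = (\<Sum>i=1..n. Ag g n i) / (real n)^2"
definition Dg :: "(nat \<Rightarrow> nat \<Rightarrow> real) \<Rightarrow> nat \<Rightarrow> nat \<Rightarrow> nat \<Rightarrow> real" where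
  "Dg g n i i' = (\<Sum>\<pi>\<in>PS n. g i (\<pi> i) * g i' (\<pi> i')) - fact n / (real n)^2 * Ag g n i * Ag g n i'"

context
  fixes g :: "nat \<Rightarrow> nat \<Rightarrow> real" and n :: nat and M :: real
  assumes n2: "n \<ge> 2" and gM: "\<And>i j. i \<in> {1..n} \<Longrightarrow> j \<in> {1..n} \<Longrightarrow> \<bar>g i j\<bar> \<le> M"
begin


lemma M_nonneg: "M \<ge> 0"
  using gM[of 1 1] n2 by auto

lemma Ag_bound: "i \<in> {1..n} \<Longrightarrow> \<bar>Ag g n i\<bar> \<le> real n * M"
proof -
  assume i: "i \<in> {1..n}"
  have "\<bar>Ag g n i\<bar> \<le> (\<Sum>j=1..n. \<bar>g i j\<bar>)" unfolding Ag_def by (rule sum_abs)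
  also have "\<dots> \<le> (\<Sum>j=1..n. M)" by (rule sum_mono) (use gM i in auto)
  finally show ?thesis by simp
qed

lemma sum_Tg: "(\<Sum>\<pi>\<in>PS n. Tg g n \<pi>) = fact n * Rg g n"
proof -
  have "(\<Sum>\<pi>\<in>PS n. Tg g n \<pi>) = (\<Sum>\<pi>\<in>PS n. \<Sum>i=1..n. (1 / real n) * g i (\<pi> i))"
    unfolding Tg_def sum_distrib_left ..
  also have "\<dots> = (\<Sum>i=1..n. \<Sum>\<pi>\<in>PS n. (1 / real n) * g i (\<pi> i))"
    by (rule sum.swap)
  also have "\<dots> = (1 / real n) * (\<Sum>i=1..n. \<Sum>\<pi>\<in>PS n. g i (\<pi> i))"
    by (simp only: sum_distrib_left)
  also have "\<dots> = (1 / real n) * (\<Sum>i=1..n. fact (n - 1) * Ag g n i)"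
    by (intro arg_cong2[where f="(*)"] refl sum.cong) (simp_all add: perm_sum1 Ag_def)
  also have "\<dots> = fact n * Rg g n"
  proof -
    have "(fact n :: real) = real n * fact (n - 1)" using n2
      by (metis Suc_diff_1 fact_Suc less_le_trans of_nat_mult pos2 of_nat_fact)
    thus ?thesis unfolding Rg_def using n2 by (simp add: sum_distrib_left power2_eq_square field_simps)
  qed
  finally show ?thesis .
qed


lemma var_expand: "(\<Sum>\<pi>\<in>PS n. (Tg g n \<pi> - Rg g n)^2) = (\<Sum>i=1..n. \<Sum>i'=1..n. Dg g n i i') / (real n)^2"
proof -
  have e0: "(\<Sum>\<pi>\<in>PS n. (Tg g n \<pi> - Rg g n)^2) = (\<Sum>\<pi>\<in>PS n. Tg g n \<pi> ^ 2) - 2 * Rg g n * (\<Sum>\<pi>\<in>PS n. Tg g n \<pi>) + fact n * Rg g n^2"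
    by (simp add: power2_diff sum_subtractf sum.distrib sum_distrib_left card_PS card_PS' algebra_simps)
  have e1: "(\<Sum>\<pi>\<in>PS n. Tg g n \<pi> ^ 2) = (\<Sum>i=1..n. \<Sum>i'=1..n. \<Sum>\<pi>\<in>PS n. g i (\<pi> i) * g i' (\<pi> i')) / (real n)^2"
  proof -
    have "Tg g n \<pi> ^ 2 = (\<Sum>i=1..n. \<Sum>i'=1..n. g i (\<pi> i) * g i' (\<pi> i')) / (real n)^2" for \<pi>
      unfolding Tg_def power2_eq_square by (simp add: sum_product)
    hence "(\<Sum>\<pi>\<in>PS n. Tg g n \<pi> ^ 2) = (\<Sum>\<pi>\<in>PS n. \<Sum>i=1..n. \<Sum>i'=1..n. g i (\<pi> i) * g i' (\<pi> i')) / (real n)^2"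
      by (simp add: sum_divide_distrib[symmetric])
    also have "(\<Sum>\<pi>\<in>PS n. \<Sum>i=1..n. \<Sum>i'=1..n. g i (\<pi> i) * g i' (\<pi> i'))
        = (\<Sum>i=1..n. \<Sum>\<pi>\<in>PS n. \<Sum>i'=1..n. g i (\<pi> i) * g i' (\<pi> i'))" by (rule sum.swap)
    also have "\<dots> = (\<Sum>i=1..n. \<Sum>i'=1..n. \<Sum>\<pi>\<in>PS n. g i (\<pi> i) * g i' (\<pi> i'))"
      by (rule sum.cong[OF refl], rule sum.swap)
    finally show ?thesis .
  qed
  have e2: "fact n * Rg g n^2 = (\<Sum>i=1..n. \<Sum>i'=1..n. fact n / (real n)^2 * Ag g n i * Ag g n i') / (real n)^2"
  proof -
    have a: "(\<Sum>i=1..n. \<Sum>i'=1..n. fact n / (real n)^2 * Ag g n i * Ag g n i') = fact n / (real n)^2 * (\<Sum>i=1..n. \<Sum>i'=1..n. Ag g n i * Ag g n i')"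
      by (simp add: sum_distrib_left mult.assoc)
    have b: "(\<Sum>i=1..n. \<Sum>i'=1..n. Ag g n i * Ag g n i') = (\<Sum>i=1..n. Ag g n i)^2"
      by (simp add: power2_eq_square sum_product)
    show ?thesis unfolding a b Rg_def by (simp add: power2_eq_square)
  qed
  have "(\<Sum>\<pi>\<in>PS n. (Tg g n \<pi> - Rg g n)^2) = (\<Sum>\<pi>\<in>PS n. Tg g n \<pi> ^ 2) - fact n * Rg g n^2"
    unfolding e0 sum_Tg by (simp add: power2_eq_square)
  also have "\<dots> = ((\<Sum>i=1..n. \<Sum>i'=1..n. \<Sum>\<pi>\<in>PS n. g i (\<pi> i) * g i' (\<pi> i'))
       - (\<Sum>i=1..n. \<Sum>i'=1..n. fact n / (real n)^2 * Ag g n i * Ag g n i')) / (real n)^2"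
    unfolding e1 e2 by (simp add: diff_divide_distrib)
  also have "(\<Sum>i=1..n. \<Sum>i'=1..n. \<Sum>\<pi>\<in>PS n. g i (\<pi> i) * g i' (\<pi> i'))
       - (\<Sum>i=1..n. \<Sum>i'=1..n. fact n / (real n)^2 * Ag g n i * Ag g n i') = (\<Sum>i=1..n. \<Sum>i'=1..n. Dg g n i i')"
    unfolding Dg_def by (simp add: sum_subtractf)
  finally show ?thesis .
qed

lemma D_diag: "i \<in> {1..n} \<Longrightarrow> \<bar>Dg g n i i\<bar> \<le> 2 * fact n * M^2"
proof -
  assume i: "i \<in> {1..n}"
  have "\<bar>\<Sum>\<pi>\<in>PS n. g i (\<pi> i) * g i (\<pi> i)\<bar> \<le> (\<Sum>\<pi>\<in>PS n. M^2)"
  proof (rule order.trans[OF sum_abs sum_mono])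
    fix \<pi> assume p: "\<pi> \<in> PS n"
    hence pi: "\<pi> i \<in> {1..n}" using i permutes_in_image[of \<pi> "{1..n}" i] by blast
    have "\<bar>g i (\<pi> i)\<bar> \<le> M" using gM[OF i pi] .
    hence "\<bar>g i (\<pi> i)\<bar> * \<bar>g i (\<pi> i)\<bar> \<le> M * M" by (intro mult_mono) auto
    thus "\<bar>g i (\<pi> i) * g i (\<pi> i)\<bar> \<le> M^2"
      by (simp only: abs_mult power2_eq_square)
  qed
  also have "\<dots> = fact n * M^2" by (simp add: card_PS card_PS')
  finally have a: "\<bar>\<Sum>\<pi>\<in>PS n. g i (\<pi> i) * g i (\<pi> i)\<bar> \<le> fact n * M^2" .
  have "\<bar>Ag g n i * Ag g n i\<bar> \<le> (real n * M) * (real n * M)"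
    unfolding abs_mult by (intro mult_mono Ag_bound[OF i]) (use M_nonneg in auto)
  hence "fact n / (real n)^2 * \<bar>Ag g n i * Ag g n i\<bar> \<le> fact n / (real n)^2 * ((real n * M) * (real n * M))"
    by (intro mult_left_mono) auto
  moreover have "\<bar>fact n / (real n)^2 * Ag g n i * Ag g n i\<bar> = fact n / (real n)^2 * \<bar>Ag g n i * Ag g n i\<bar>"
    unfolding mult.assoc abs_mult by simp
  ultimately have "\<bar>fact n / (real n)^2 * Ag g n i * Ag g n i\<bar> \<le> fact n / (real n)^2 * ((real n * M) * (real n * M))"
    by linarith
  also have "\<dots> = fact n * M^2" using n2 by (simp add: power2_eq_square field_simps)
  finally show ?thesis using a unfolding Dg_def by linarith
qed

lemma D_off: "i \<in> {1..n} \<Longrightarrow> i' \<in> {1..n} \<Longrightarrow> i \<noteq> i' \<Longrightarrow>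
   \<bar>Dg g n i i'\<bar> \<le> 2 * real n * M^2 * fact (n - 2)"
proof -
  assume i: "i \<in> {1..n}" and i': "i' \<in> {1..n}" and ii: "i \<noteq> i'"
  define c where "c = (\<Sum>j=1..n. g i j * g i' j)"
  have "(\<Sum>\<pi>\<in>PS n. g i (\<pi> i) * g i' (\<pi> i')) = fact (n - 2) * (\<Sum>j\<in>{1..n}. \<Sum>k\<in>{1..n} - {j}. g i j * g i' k)"
    using perm_sum2[of "{1..n}" i i' "\<lambda>a b. g i a * g i' b"] i i' ii by simp
  also have "(\<Sum>j\<in>{1..n}. \<Sum>k\<in>{1..n} - {j}. g i j * g i' k) = (\<Sum>j\<in>{1..n}. g i j * (Ag g n i' - g i' j))"
  proof (intro sum.cong refl)
    fix j assume j: "j \<in> {1..n}"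
    have "(\<Sum>k\<in>{1..n}. g i' k) = g i' j + (\<Sum>k\<in>{1..n} - {j}. g i' k)"
      using j by (subst sum.remove[of _ j]) auto
    thus "(\<Sum>k\<in>{1..n} - {j}. g i j * g i' k) = g i j * (Ag g n i' - g i' j)"
      unfolding Ag_def by (simp add: sum_distrib_left[symmetric] algebra_simps)
  qed
  also have "\<dots> = (\<Sum>j=1..n. g i j * Ag g n i') - c"
    unfolding c_def by (simp add: right_diff_distrib sum_subtractf)
  also have "(\<Sum>j=1..n. g i j * Ag g n i') = Ag g n i * Ag g n i'"
    unfolding Ag_def[of g n i] by (rule sum_distrib_right[symmetric])
  finally have e1: "(\<Sum>\<pi>\<in>PS n. g i (\<pi> i) * g i' (\<pi> i')) = fact (n - 2) * (Ag g n i * Ag g n i' - c)" .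
  have D: "Dg g n i i' = fact (n - 2) * (Ag g n i * Ag g n i' / real n - c)"
    unfolding Dg_def e1 fact_rel[OF n2] using n2 by (simp add: power2_eq_square field_simps)
  have c: "\<bar>c\<bar> \<le> real n * M^2"
  proof -
    have "\<bar>c\<bar> \<le> (\<Sum>j=1..n. \<bar>g i j * g i' j\<bar>)" unfolding c_def by (rule sum_abs)
    also have "\<dots> \<le> (\<Sum>j=1..n. M^2)"
    proof (rule sum_mono)
      fix j assume j: "j \<in> {1..n}"
      show "\<bar>g i j * g i' j\<bar> \<le> M^2" unfolding abs_mult power2_eq_square
        by (intro mult_mono gM i i' j) (use M_nonneg in auto)
    qed
    finally show ?thesis by simp
  qed
  have aa: "\<bar>Ag g n i * Ag g n i' / real n\<bar> \<le> real n * M^2"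
  proof -
    have "\<bar>Ag g n i * Ag g n i'\<bar> \<le> (real n * M) * (real n * M)"
      unfolding abs_mult by (intro mult_mono Ag_bound i i') (use M_nonneg in auto)
    thus ?thesis using n2 by (simp add: power2_eq_square divide_simps abs_mult algebra_simps)
  qed
  have "\<bar>Ag g n i * Ag g n i' / real n - c\<bar> \<le> 2 * real n * M^2" using aa c by linarith
  hence "fact (n - 2) * \<bar>Ag g n i * Ag g n i' / real n - c\<bar> \<le> fact (n - 2) * (2 * real n * M^2)"
    by (intro mult_left_mono) auto
  thus ?thesis unfolding D abs_mult by (simp add: algebra_simps)
qed

lemma var_bound: "(\<Sum>\<pi>\<in>PS n. (Tg g n \<pi> - Rg g n)^2) \<le> fact n * (4 * M^2 / real n)"
proof -
  have row: "\<bar>\<Sum>i'=1..n. Dg g n i i'\<bar> \<le> 4 * fact n * M^2" if i: "i \<in> {1..n}" for i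
  proof -
    have "\<bar>\<Sum>i'=1..n. Dg g n i i'\<bar> \<le> (\<Sum>i'=1..n. \<bar>Dg g n i i'\<bar>)" by (rule sum_abs)
    also have "\<dots> = \<bar>Dg g n i i\<bar> + (\<Sum>i'\<in>{1..n} - {i}. \<bar>Dg g n i i'\<bar>)"
      using i by (subst sum.remove[of _ i]) auto
    also have "\<dots> \<le> 2 * fact n * M^2 + (\<Sum>i'\<in>{1..n} - {i}. 2 * real n * M^2 * fact (n - 2))"
      by (intro add_mono D_diag i sum_mono D_off) auto
    also have "(\<Sum>i'\<in>{1..n} - {i}. 2 * real n * M^2 * fact (n - 2)) = (real n - 1) * (2 * real n * M^2 * fact (n - 2))"
      using i n2 by (simp add: of_nat_diff)
    also have "\<dots> = 2 * fact n * M^2" unfolding fact_rel[OF n2] by (simp add: algebra_simps)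
    finally show ?thesis by simp
  qed
  have "(\<Sum>\<pi>\<in>PS n. (Tg g n \<pi> - Rg g n)^2) \<le> \<bar>\<Sum>i=1..n. \<Sum>i'=1..n. Dg g n i i'\<bar> / (real n)^2"
    unfolding var_expand by (intro divide_right_mono abs_ge_self) auto
  also have "\<dots> \<le> (\<Sum>i=1..n. 4 * fact n * M^2) / (real n)^2"
    by (intro divide_right_mono order.trans[OF sum_abs sum_mono] row) auto
  also have "\<dots> = fact n * (4 * M^2 / real n)" using n2 by (simp add: power2_eq_square field_simps)
  finally show ?thesis .
qed

end

lemma conv_part:
  "conv_prob_uniform (\<lambda>n. R_pmf n \<theta>)"
  unfolding conv_prob_uniform_def
proof (intro allI impI)
  fix f :: "real \<times> real \<Rightarrow> real" and \<epsilon> :: real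
  assume cont: "continuous_on (cbox (0,0) (1,1)) f" and eps: "\<epsilon> > 0"
  define Q :: "(real \<times> real) set" where "Q = cbox (0,0) (1,1)"
  define I where "I = integral Q f"
  obtain M where M: "\<And>p. p \<in> Q \<Longrightarrow> \<bar>f p\<bar> \<le> M"
  proof -
    have "compact (f ` Q)" unfolding Q_def by (rule compact_continuous_image[OF cont compact_cbox])
    hence "bounded (f ` Q)" by (rule compact_imp_bounded)
    then obtain a where "\<forall>x\<in>f ` Q. norm x \<le> a" unfolding bounded_iff by blast
    thus ?thesis using that by auto
  qed
  define gg where "gg = (\<lambda>n i j. f (real i / real n, real j / real n))"
  have ggM: "\<bar>gg n i j\<bar> \<le> M" if "i \<in> {1..n}" "j \<in> {1..n}" for n i j
    unfolding gg_def by (rule M) (use that in \<open>auto simp: Q_def cbox_Pair_iff\<close>)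
  define A where "A = (\<lambda>n. {\<pi>. \<bar>(1 / real n) * (\<Sum>i=1..n. f (real i / real n, real (\<pi> i) / real n)) - I\<bar> > \<epsilon>})"
  define K where "K = exp (exp (2 * \<theta>))"
  define B where "B = (\<lambda>n. K * 16 * M^2 * (1 / real n) * (1 / (\<epsilon>^2 * (W n \<theta>)^2)))"
  have Rlim: "Rs f \<longlonglongrightarrow> I" unfolding I_def Q_def by (rule riemann_2d[OF cont])
  have Blim: "B \<longlonglongrightarrow> 0"
  proof -
    have "B \<longlonglongrightarrow> K * 16 * M^2 * 0 * (1 / (\<epsilon>^2 * (exp (-1) * exp (exp \<theta>))^2))"
      unfolding B_def using eps
      by (intro tendsto_intros W_limit lim_inverse_n') simp
    thus ?thesis by simp
  qed
  have key: "measure_pmf.prob (R_pmf n \<theta>) (A n) \<le> sqrt (B n)"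
    if n2: "n \<ge> 2" and Rn: "\<bar>Rs f n - I\<bar> \<le> \<epsilon> / 2" for n
  proof -
    define e where "e = (\<lambda>\<pi>. exp (\<theta> * real (fixpts n \<pi>)))"
    define ind where "ind = (\<lambda>\<pi>. if \<pi> \<in> A n then 1 else (0::real))"
    have fin: "finite (PS n)" by (simp add: finite_permutations)
    have Zp: "Zs n \<theta> > 0" by (rule Zs_pos)
    have Wp: "W n \<theta> > 0" by (rule W_pos)
    have prob: "measure_pmf.prob (R_pmf n \<theta>) (A n) = (\<Sum>\<pi>\<in>PS n. e \<pi> * ind \<pi>) / Zs n \<theta>"
      unfolding prob_R e_def ind_def by (simp add: sum_divide_distrib)
    have CS: "(\<Sum>\<pi>\<in>PS n. e \<pi> * ind \<pi>)^2 \<le> (\<Sum>\<pi>\<in>PS n. (e \<pi>)^2) * (\<Sum>\<pi>\<in>PS n. (ind \<pi>)^2)"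
      by (rule Cauchy_Schwarz_ineq_sum)
    have S2: "(\<Sum>\<pi>\<in>PS n. (e \<pi>)^2) \<le> fact n * K"
    proof -
      have "(\<Sum>\<pi>\<in>PS n. (e \<pi>)^2) = Zs n (2 * \<theta>)"
        unfolding Zs_def e_def by (intro sum.cong refl) (simp add: power2_eq_square exp_add[symmetric])
      also have "\<dots> = fact n * W n (2 * \<theta>)" by (rule Zs_W)
      also have "\<dots> \<le> fact n * K" unfolding K_def by (intro mult_left_mono W_bound) auto
      finally show ?thesis .
    qed
    have gM': "\<And>i j. i \<in> {1..n} \<Longrightarrow> j \<in> {1..n} \<Longrightarrow> \<bar>gg n i j\<bar> \<le> M" by (rule ggM)
    have Rg_eq: "Rg (gg n) n = Rs f n"
      unfolding Rg_def unfolding Ag_def unfolding Rs_def gg_def using n2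
      by (simp add: sum_divide_distrib power2_eq_square)
    have S3: "(\<Sum>\<pi>\<in>PS n. (ind \<pi>)^2) \<le> fact n * (16 * M^2 / (real n * \<epsilon>^2))"
    proof -
      have pt: "(ind \<pi>)^2 \<le> (Tg (gg n) n \<pi> - Rg (gg n) n)^2 / (\<epsilon>/2)^2" for \<pi>
      proof (cases "\<pi> \<in> A n")
        case True
        have "Tg (gg n) n \<pi> = (1 / real n) * (\<Sum>i=1..n. f (real i / real n, real (\<pi> i) / real n))"
          unfolding Tg_def unfolding gg_def by simp
        hence "\<bar>Tg (gg n) n \<pi> - I\<bar> > \<epsilon>" using True unfolding A_def by simp
        hence "\<bar>Tg (gg n) n \<pi> - Rg (gg n) n\<bar> \<ge> \<epsilon> / 2" using Rn unfolding Rg_eq by linarith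
        hence "(\<epsilon>/2)^2 \<le> (Tg (gg n) n \<pi> - Rg (gg n) n)^2"
          using eps by (metis abs_le_square_iff abs_of_pos half_gt_zero)
        thus ?thesis using True eps by (simp add: ind_def)
      qed (simp add: ind_def)
      have "(\<Sum>\<pi>\<in>PS n. (ind \<pi>)^2) \<le> (\<Sum>\<pi>\<in>PS n. (Tg (gg n) n \<pi> - Rg (gg n) n)^2) / (\<epsilon>/2)^2"
        unfolding sum_divide_distrib by (rule sum_mono) (rule pt)
      also have "\<dots> \<le> fact n * (4 * M^2 / real n) / (\<epsilon>/2)^2"
        by (intro divide_right_mono var_bound[OF n2]) (use ggM in auto)
      also have "\<dots> = fact n * (16 * M^2 / (real n * \<epsilon>^2))"
        by (simp add: power2_eq_square field_simps)
      finally show ?thesis .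
    qed
    have "(measure_pmf.prob (R_pmf n \<theta>) (A n))^2 = (\<Sum>\<pi>\<in>PS n. e \<pi> * ind \<pi>)^2 / (Zs n \<theta>)^2"
      unfolding prob by (simp add: power_divide)
    also have "\<dots> \<le> (fact n * K) * (fact n * (16 * M^2 / (real n * \<epsilon>^2))) / (Zs n \<theta>)^2"
    proof (intro divide_right_mono order.trans[OF CS] mult_mono S2 S3)
      show "0 \<le> fact n * K" unfolding K_def by simp
    qed (auto intro: sum_nonneg)
    also have "\<dots> = B n"
      unfolding B_def Zs_W using Wp eps n2 by (simp add: power2_eq_square field_simps)
    finally have sq: "(measure_pmf.prob (R_pmf n \<theta>) (A n))^2 \<le> B n" .
    show ?thesis by (rule real_le_rsqrt[OF sq])
  qed
  have ev: "eventually (\<lambda>n. measure_pmf.prob (R_pmf n \<theta>) (A n) \<le> sqrt (B n)) sequentially"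
  proof -
    have "eventually (\<lambda>n. \<bar>Rs f n - I\<bar> < \<epsilon> / 2) sequentially"
      using Rlim eps unfolding tendsto_iff dist_real_def by (meson half_gt_zero)
    moreover have "eventually (\<lambda>n. n \<ge> (2::nat)) sequentially" by (rule eventually_ge_at_top)
    ultimately show ?thesis by eventually_elim (auto intro: key)
  qed
  have "(\<lambda>n. measure_pmf.prob (R_pmf n \<theta>) (A n)) \<longlonglongrightarrow> 0"
  proof (rule tendsto_sandwich[OF _ ev])
    show "\<forall>\<^sub>F n in sequentially. 0 \<le> measure_pmf.prob (R_pmf n \<theta>) (A n)" by simp
    show "(\<lambda>n. 0) \<longlonglongrightarrow> (0::real)" by simp
    have "(\<lambda>n. sqrt (B n)) \<longlonglongrightarrow> sqrt 0" by (intro tendsto_intros Blim)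
    thus "(\<lambda>n. sqrt (B n)) \<longlonglongrightarrow> 0" by simp
  qed
  thus "(\<lambda>n. measure_pmf.prob (R_pmf n \<theta>)
          {\<pi>. \<epsilon> < \<bar>1 / real n * (\<Sum>i = 1..n. f (real i / real n, real (\<pi> i) / real n)) -
                     integral (cbox (0, 0) (1, 1)) f\<bar>}) \<longlonglongrightarrow> 0"
    unfolding A_def I_def Q_def .
qed

theorem proposition1p8:
  fixes \<theta> :: real
  assumes "\<theta> \<noteq> 0"
  shows "weak_conv_m (\<lambda>n. distr (measure_pmf (R_pmf n \<theta>)) borel (\<lambda>\<pi>. real (fixpts n \<pi>)))
                     (distr (measure_pmf (poisson_pmf (exp \<theta>))) borel real)
       \<and> (\<forall>k::nat. (\<lambda>n. measure_pmf.expectation (R_pmf n \<theta>) (\<lambda>\<pi>. real (fixpts n \<pi>) ^ k))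
             \<longlonglongrightarrow> measure_pmf.expectation (poisson_pmf (exp \<theta>)) (\<lambda>m. real m ^ k))
       \<and> conv_prob_uniform (\<lambda>n. R_pmf n \<theta>)
       \<and> (\<forall>n\<ge>2. measure_pmf.prob (R_pmf n \<theta>) {\<pi>. \<pi> 1 = 1 \<and> \<pi> 2 = 2}
                / measure_pmf.prob (R_pmf n \<theta>) {\<pi>. \<pi> 1 = 2 \<and> \<pi> 2 = 1} = exp (2 * \<theta>)
              \<and> exp (2 * \<theta>) \<noteq> 1)"
proof (intro conjI allI impI)
  show "weak_conv_m (\<lambda>n. distr (measure_pmf (R_pmf n \<theta>)) borel (\<lambda>\<pi>. real (fixpts n \<pi>)))
                     (distr (measure_pmf (poisson_pmf (exp \<theta>))) borel real)" by (rule weak_part)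
  fix k :: nat
  show "(\<lambda>n. measure_pmf.expectation (R_pmf n \<theta>) (\<lambda>\<pi>. real (fixpts n \<pi>) ^ k))
             \<longlonglongrightarrow> measure_pmf.expectation (poisson_pmf (exp \<theta>)) (\<lambda>m. real m ^ k)"
    by (rule moments_conv)
next
  show "conv_prob_uniform (\<lambda>n. R_pmf n \<theta>)" by (rule conv_part)
next
  fix n :: nat assume "n \<ge> 2"
  thus "measure_pmf.prob (R_pmf n \<theta>) {\<pi>. \<pi> 1 = 1 \<and> \<pi> 2 = 2}
                / measure_pmf.prob (R_pmf n \<theta>) {\<pi>. \<pi> 1 = 2 \<and> \<pi> 2 = 1} = exp (2 * \<theta>)"
    by (rule part_c)
  show "exp (2 * \<theta>) \<noteq> 1" using assms by simp
qed

end
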